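(* Let $\mathcal{H}$ be a complex Hilbert space, let $N(\cdot)$ be a weakly unitarily invariant self-adjoint algebra norm on $\mathbb{B}(\mathcal{H})$, and let $T\in\mathbb{B}(\mathcal{H})$ with $\|T\|\le 1$. Then $$w_{N}(TT^* - T^*T) \leq 4N(T)\sup_{U\in\mathcal{U}}N(U).$$
   Context: $\mathbb{B}(\mathcal{H})$ is the algebra of bounded linear operators on $\mathcal{H}$, $\|\cdot\|$ the usual operator norm, and $\mathcal{U}$ the group of unitary operators in $\mathbb{B}(\mathcal{H})$. A norm $N(\cdot)$ on $\mathbb{B}(\mathcal{H})$ is an algebra norm if $N(TS)\le N(T)N(S)$ for all $T,S$; self-adjoint if $N(T^* )=N(T)$ for all $T$; weakly unitarily invariant if $N(U^*TU)=N(T)$ for all $T\in\mathbb{B}(\mathcal{H})$, $U\in\mathcal{U}$. For $A\in\mathbb{B}(\mathcal{H})$, ${\rm Re}(A)=\frac{A+A^*}{2}$. The generalized numerical radius is $w_N(T)=\sup_{\theta\in\mathbb{R}} N\big({\rm Re}(e^{i\theta}T)\big)$. *)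

theory Defs
  imports "HOL-Analysis.Analysis"
begin

class complex_hilbert = real_normed_vector + complete_space +
  fixes scaleC :: "complex \<Rightarrow> 'a \<Rightarrow> 'a"
    and cinner :: "'a \<Rightarrow> 'a \<Rightarrow> complex"
  assumes scaleC_add_right: "scaleC a (x + y) = scaleC a x + scaleC a y"
    and scaleC_add_left: "scaleC (a + b) x = scaleC a x + scaleC b x"
    and scaleC_scaleC: "scaleC a (scaleC b x) = scaleC (a * b) x"
    and scaleC_one: "scaleC 1 x = x"
    and scaleR_scaleC: "scaleR r x = scaleC (complex_of_real r) x"
    and cinner_commute: "cinner x y = cnj (cinner y x)"
    and cinner_add_right: "cinner x (y + z) = cinner x y + cinner x z"
    and cinner_scaleC_right: "cinner x (scaleC a y) = a * cinner x y"
    and cinner_nonneg: "0 \<le> Re (cinner x x)"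
    and cinner_eq_zero_iff: "cinner x x = 0 \<longleftrightarrow> x = 0"
    and norm_eq_sqrt_cinner: "norm x = sqrt (Re (cinner x x))"

definition bounded_clinear_op :: "('h::complex_hilbert \<Rightarrow> 'h) \<Rightarrow> bool" where
  "bounded_clinear_op T \<longleftrightarrow>
     (\<forall>x y. T (x + y) = T x + T y) \<and>
     (\<forall>a x. T (scaleC a x) = scaleC a (T x)) \<and>
     (\<exists>K. \<forall>x. norm (T x) \<le> norm x * K)"

definition BH :: "('h::complex_hilbert \<Rightarrow> 'h) set" where
  "BH = {T. bounded_clinear_op T}"

definition adj :: "('h::complex_hilbert \<Rightarrow> 'h) \<Rightarrow> ('h \<Rightarrow> 'h)" where
  "adj T = (THE S. \<forall>x y. cinner (T x) y = cinner x (S y))"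

definition unitaries :: "('h::complex_hilbert \<Rightarrow> 'h) set" where
  "unitaries = {U \<in> BH. adj U \<circ> U = id \<and> U \<circ> adj U = id}"

definition op_add :: "('h::complex_hilbert \<Rightarrow> 'h) \<Rightarrow> ('h \<Rightarrow> 'h) \<Rightarrow> ('h \<Rightarrow> 'h)" where
  "op_add T S = (\<lambda>x. T x + S x)"

definition op_scale :: "complex \<Rightarrow> ('h::complex_hilbert \<Rightarrow> 'h) \<Rightarrow> ('h \<Rightarrow> 'h)" where
  "op_scale a T = (\<lambda>x. scaleC a (T x))"

definition ReOp :: "('h::complex_hilbert \<Rightarrow> 'h) \<Rightarrow> ('h \<Rightarrow> 'h)" where
  "ReOp A = op_scale (1/2) (op_add A (adj A))"

definition is_norm_on_BH :: "(('h::complex_hilbert \<Rightarrow> 'h) \<Rightarrow> real) \<Rightarrow> bool" where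
  "is_norm_on_BH N \<longleftrightarrow>
     (\<forall>T\<in>BH. 0 \<le> N T) \<and>
     (\<forall>T\<in>BH. N T = 0 \<longleftrightarrow> T = (\<lambda>x. 0)) \<and>
     (\<forall>T\<in>BH. \<forall>S\<in>BH. N (op_add T S) \<le> N T + N S) \<and>
     (\<forall>a. \<forall>T\<in>BH. N (op_scale a T) = cmod a * N T)"

definition algebra_norm :: "(('h::complex_hilbert \<Rightarrow> 'h) \<Rightarrow> real) \<Rightarrow> bool" where
  "algebra_norm N \<longleftrightarrow> is_norm_on_BH N \<and> (\<forall>T\<in>BH. \<forall>S\<in>BH. N (T \<circ> S) \<le> N T * N S)"

definition self_adjoint_norm :: "(('h::complex_hilbert \<Rightarrow> 'h) \<Rightarrow> real) \<Rightarrow> bool" where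
  "self_adjoint_norm N \<longleftrightarrow> (\<forall>T\<in>BH. N (adj T) = N T)"

definition weakly_unitarily_invariant :: "(('h::complex_hilbert \<Rightarrow> 'h) \<Rightarrow> real) \<Rightarrow> bool" where
  "weakly_unitarily_invariant N \<longleftrightarrow> (\<forall>T\<in>BH. \<forall>U\<in>unitaries. N (adj U \<circ> T \<circ> U) = N T)"

definition gen_num_radius :: "(('h::complex_hilbert \<Rightarrow> 'h) \<Rightarrow> real) \<Rightarrow> ('h \<Rightarrow> 'h) \<Rightarrow> ereal" where
  "gen_num_radius N T = (SUP \<theta>\<in>(UNIV::real set). ereal (N (ReOp (op_scale (exp (\<i> * complex_of_real \<theta>)) T))))"

end

theory Submission
  imports Defs
begin



lemma scaleC_zero_right[simp]: "scaleC a 0 = 0"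
proof -
  have "scaleC a 0 = scaleC a 0 + scaleC a 0" using scaleC_add_right[of a 0 0] by simp
  then show ?thesis by simp
qed

lemma scaleC_zero_left[simp]: "scaleC 0 x = 0"
proof -
  have "scaleC 0 x = scaleC 0 x + scaleC 0 x" using scaleC_add_left[of 0 0 x] by simp
  then show ?thesis by simp
qed

lemma scaleC_minus_right: "scaleC a (- x) = - scaleC a x"
proof -
  have "scaleC a x + scaleC a (- x) = 0" using scaleC_add_right[of a x "-x"] by (simp only: right_minus scaleC_zero_right)
  then show ?thesis by (metis neg_eq_iff_add_eq_0)
qed

lemma scaleC_diff_right: "scaleC a (x - y) = scaleC a x - scaleC a y"
  using scaleC_add_right[of a x "-y"] by (simp add: scaleC_minus_right)

lemma scaleC_minus_left: "scaleC (- a) x = - scaleC a x"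
proof -
  have "scaleC a x + scaleC (- a) x = 0" proof -
    have "scaleC a x + scaleC (- a) x = scaleC (a + - a) x" by (rule scaleC_add_left[symmetric])
    also have "\<dots> = 0" by simp
    finally show ?thesis .
  qed
  then show ?thesis by (metis neg_eq_iff_add_eq_0)
qed

lemma scaleC_diff_left: "scaleC (a - b) x = scaleC a x - scaleC b x"
  using scaleC_add_left[of a "-b" x] by (simp add: scaleC_minus_left)

lemma scaleC_of_real: "scaleC (complex_of_real r) x = scaleR r x"
  by (simp add: scaleR_scaleC)

lemma scaleC_scaleR_comm: "scaleC a (scaleR r x) = scaleR r (scaleC a x)"
  by (simp add: scaleR_scaleC scaleC_scaleC mult.commute)

lemma cinner_add_left: "cinner (x + y) z = cinner x z + cinner y z"
proof -
  have "cinner (x + y) z = cnj (cinner z (x + y))" by (rule cinner_commute)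
  also have "\<dots> = cnj (cinner z x) + cnj (cinner z y)" by (simp add: cinner_add_right)
  also have "\<dots> = cinner x z + cinner y z" by (simp add: cinner_commute[of x z] cinner_commute[of y z])
  finally show ?thesis .
qed

lemma cinner_scaleC_left: "cinner (scaleC a x) y = cnj a * cinner x y"
proof -
  have "cinner (scaleC a x) y = cnj (cinner y (scaleC a x))" by (rule cinner_commute)
  also have "\<dots> = cnj a * cnj (cinner y x)" by (simp add: cinner_scaleC_right)
  also have "\<dots> = cnj a * cinner x y" by (simp add: cinner_commute[of x y])
  finally show ?thesis .
qed

lemma cinner_zero_right[simp]: "cinner x 0 = 0"
  using cinner_add_right[of x 0 0] by simp

lemma cinner_zero_left[simp]: "cinner 0 x = 0"
  using cinner_add_left[of 0 0 x] by simp

lemma cinner_minus_right: "cinner x (- y) = - cinner x y"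
proof -
  have "cinner x y + cinner x (- y) = 0" using cinner_add_right[of x y "-y"] by (simp only: right_minus cinner_zero_right)
  then show ?thesis by (simp add: Groups.add_eq_0_iff)
qed

lemma cinner_minus_left: "cinner (- x) y = - cinner x y"
proof -
  have "cinner x y + cinner (- x) y = 0" using cinner_add_left[of x "-x" y] by (simp only: right_minus cinner_zero_left)
  then show ?thesis by (simp add: Groups.add_eq_0_iff)
qed

lemma cinner_diff_right: "cinner x (y - z) = cinner x y - cinner x z"
  using cinner_add_right[of x y "-z"] by (simp add: cinner_minus_right)

lemma cinner_diff_left: "cinner (x - y) z = cinner x z - cinner y z"
  using cinner_add_left[of x "-y" z] by (simp add: cinner_minus_left)

lemma cinner_scaleR_left: "cinner (scaleR r x) y = of_real r * cinner x y"
  by (simp add: scaleR_scaleC cinner_scaleC_left)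

lemma cinner_scaleR_right: "cinner x (scaleR r y) = of_real r * cinner x y"
  by (simp add: scaleR_scaleC cinner_scaleC_right)

lemma norm_sq_cinner: "(norm x)^2 = Re (cinner x x)"
  by (simp add: norm_eq_sqrt_cinner cinner_nonneg)

lemma cinner_self: "cinner x x = complex_of_real ((norm x)^2)"
proof -
  have "Im (cinner x x) = 0"
  proof -
    have "Im (cinner x x) = Im (cnj (cinner x x))" using cinner_commute[of x x] by simp
    then show ?thesis by simp
  qed
  then show ?thesis by (simp add: norm_sq_cinner complex_eq_iff)
qed

lemma Re_cinner_sym: "Re (cinner y x) = Re (cinner x y)"
  by (subst cinner_commute) simp

lemma norm_add_sq: "(norm (x + y))^2 = (norm x)^2 + 2 * Re (cinner x y) + (norm y)^2"
  by (simp add: norm_sq_cinner cinner_add_left cinner_add_right Re_cinner_sym[of y x])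

lemma norm_diff_sq: "(norm (x - y))^2 = (norm x)^2 - 2 * Re (cinner x y) + (norm y)^2"
  by (simp add: norm_sq_cinner cinner_diff_left cinner_diff_right Re_cinner_sym[of y x])

lemma norm_scaleC: "norm (scaleC a x) = cmod a * norm x"
proof -
  have "cinner (scaleC a x) (scaleC a x) = (cnj a * a) * cinner x x"
    by (simp add: cinner_scaleC_left cinner_scaleC_right)
  also have "cnj a * a = complex_of_real ((cmod a)^2)"
    using complex_norm_square[of a] by (simp add: mult.commute)
  finally have "cinner (scaleC a x) (scaleC a x) = complex_of_real ((cmod a)^2 * (norm x)^2)"
    by (simp add: cinner_self)
  then have "(norm (scaleC a x))^2 = (cmod a * norm x)^2"
    by (simp only: norm_sq_cinner Re_complex_of_real power_mult_distrib)
  then show ?thesis by (simp add: power2_eq_iff_nonneg)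
qed

lemma cinner_Re_le: "2 * Re (cinner x y) \<le> (norm x)^2 + (norm y)^2"
  using norm_diff_sq[of x y] by (smt (verit) zero_le_power2)

lemma cinner_Re_cs: "Re (cinner x y) \<le> norm x * norm y"
proof (cases "norm x * norm y = 0")
  case True
  then have "x = 0 \<or> y = 0" by simp
  then show ?thesis by auto
next
  case False
  then have pos: "norm x * norm y > 0" by (simp add: less_le)
  have "2 * Re (cinner (scaleR (norm y) x) (scaleR (norm x) y)) \<le> (norm (scaleR (norm y) x))^2 + (norm (scaleR (norm x) y))^2"
    by (rule cinner_Re_le)
  then have "2 * (norm x * norm y) * Re (cinner x y) \<le> 2 * (norm x * norm y) * (norm x * norm y)"
    by (simp add: cinner_scaleR_left cinner_scaleR_right power_mult_distrib algebra_simps power2_eq_square)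
  then have h: "(norm x * norm y) * Re (cinner x y) \<le> (norm x * norm y) * (norm x * norm y)"
    by (simp add: mult.assoc)
  show ?thesis using mult_le_cancel_left_pos[OF pos] h by simp
qed

lemma cinner_cs: "cmod (cinner x y) \<le> norm x * norm y"
proof (cases "cinner x y = 0")
  case True then show ?thesis by simp
next
  case False
  define a where "a = cinner x y"
  define c where "c = cnj a / complex_of_real (cmod a)"
  have a0: "a \<noteq> 0" using False by (simp add: a_def)
  have ca: "cmod c = 1" using a0 by (simp add: c_def norm_divide)
  have "c * a = (cnj a * a) / complex_of_real (cmod a)" by (simp add: c_def)
  also have "cnj a * a = complex_of_real ((cmod a)^2)"
    using complex_norm_square[of a] by (simp add: mult.commute)
  also have "complex_of_real ((cmod a)^2) / complex_of_real (cmod a) = complex_of_real (cmod a)"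
    using a0 by (simp add: power2_eq_square)
  finally have ca2: "c * a = complex_of_real (cmod a)" .
  have "cinner x (scaleC c y) = complex_of_real (cmod a)"
    using ca2 by (simp add: cinner_scaleC_right a_def)
  then have "cmod a = Re (cinner x (scaleC c y))" by simp
  also have "\<dots> \<le> norm x * norm (scaleC c y)" by (rule cinner_Re_cs)
  also have "\<dots> = norm x * norm y" by (simp add: norm_scaleC ca)
  finally show ?thesis by (simp add: a_def)
qed

lemma bounded_linear_scaleC: "bounded_linear (scaleC a)"
  by (rule bounded_linear_intro[where K="cmod a"])
     (simp_all add: scaleC_add_right scaleC_scaleR_comm norm_scaleC mult.commute)

lemma bounded_linear_cinner_left: "bounded_linear (\<lambda>u. cinner u y)"
  by (rule bounded_linear_intro[where K="norm y"])
     (simp_all add: cinner_add_left cinner_scaleR_left scaleR_conv_of_real cinner_cs)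

lemma bounded_linear_cinner_right: "bounded_linear (\<lambda>u. cinner y u)"
  by (rule bounded_linear_intro[where K="norm y"])
     (simp_all add: cinner_add_right cinner_scaleR_right scaleR_conv_of_real, metis cinner_cs mult.commute)



lemma le_eps_aux:
  fixes u k :: real
  assumes "\<And>t. t > 0 \<Longrightarrow> u \<le> k * t" and "k \<ge> 0"
  shows "u \<le> 0"
proof (rule ccontr)
  assume "\<not> u \<le> 0"
  then have u: "u > 0" by simp
  have "u \<le> k * (u / (k + 1))" using assms(1)[of "u / (k+1)"] u assms(2) by simp
  also have "\<dots> < u" using u assms(2) by (simp add: field_simps)
  finally show False by simp
qed

lemma norm_le_half_sq: "norm (w::'a::real_normed_vector) \<le> (1 + (norm w)^2) / 2"
proof -
  have "0 \<le> (norm w - 1)^2" by simp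
  then show ?thesis by (simp add: power2_eq_square algebra_simps)
qed

lemma riesz:
  fixes f :: "'h::complex_hilbert \<Rightarrow> complex"
  assumes add: "\<And>x y. f (x + y) = f x + f y"
    and sc: "\<And>a x. f (scaleC a x) = a * f x"
    and bd: "\<And>x. cmod (f x) \<le> K * norm x"
  shows "\<exists>z. \<forall>x. f x = cinner z x"
proof (cases "\<forall>x. f x = 0")
  case True
  then show ?thesis by (intro exI[of _ 0]) simp
next
  case False
  then obtain x0 where x0: "f x0 \<noteq> 0" by blast
  have f0: "f 0 = 0" using add[of 0 0] by simp
  have fR: "f (scaleR r x) = complex_of_real r * f x" for r x
    using sc[of "complex_of_real r" x] by (simp add: scaleC_of_real)
  have fminus: "f (- x) = - f x" for x using fR[of "-1" x] by simp
  have fdiff: "f (x - y) = f x - f y" for x y using add[of x "-y"] fminus[of y] by simp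
  have blin: "bounded_linear f"
    by (rule bounded_linear_intro[where K=K]) (simp_all add: add fR scaleR_conv_of_real bd mult.commute)
  have Kpos: "K > 0"
  proof -
    have "0 < cmod (f x0)" using x0 by simp
    also have "\<dots> \<le> K * norm x0" by (rule bd)
    finally show ?thesis using zero_less_mult_iff by (metis norm_ge_zero not_less)
  qed
  define B where "B = {x::'h. norm x \<le> 1}"
  define M where "M = Sup ((\<lambda>x. Re (f x)) ` B)"
  have B0: "0 \<in> B" by (simp add: B_def)
  have bdd: "bdd_above ((\<lambda>x. Re (f x)) ` B)"
  proof (rule bdd_aboveI2)
    fix x assume "x \<in> B"
    then have "K * norm x \<le> K" using Kpos by (simp add: B_def mult_left_le)
    moreover have "Re (f x) \<le> cmod (f x)" by (rule complex_Re_le_cmod)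
    ultimately show "Re (f x) \<le> K" using bd[of x] by linarith
  qed
  have upper: "x \<in> B \<Longrightarrow> Re (f x) \<le> M" for x
    unfolding M_def by (rule cSup_upper) (use bdd in auto)
  have Pm: "Re (f y) \<le> M * norm y" for y
  proof (cases "y = 0")
    case True then show ?thesis using f0 by simp
  next
    case False
    then have ny: "norm y > 0" by simp
    have "scaleR (1 / norm y) y \<in> B" using ny by (simp add: B_def)
    then have "Re (f (scaleR (1 / norm y) y)) \<le> M" by (rule upper)
    then have "Re (f y) / norm y \<le> M" by (simp add: fR)
    then show ?thesis using ny by (simp add: divide_le_eq mult.commute)
  qed
  have Mpos: "M > 0"
  proof -
    define y where "y = scaleC (cnj (f x0)) x0"
    have "f y = cnj (f x0) * f x0" by (simp add: y_def sc)
    also have "\<dots> = complex_of_real ((cmod (f x0))^2)"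
      using complex_norm_square[of "f x0"] by (simp add: mult.commute)
    finally have "Re (f y) = (cmod (f x0))^2" by simp
    then have "0 < M * norm y" using Pm[of y] x0 by (smt (verit) zero_less_power2 zero_less_norm_iff)
    then show ?thesis by (simp add: zero_less_mult_iff)
  qed
  define e :: "nat \<Rightarrow> real" where "e n = inverse (real (Suc n))" for n
  have epos: "e n > 0" for n by (simp add: e_def)
  have "\<forall>n. \<exists>x. x \<in> B \<and> M - e n < Re (f x)"
  proof
    fix n
    have "M - e n < M" using epos[of n] by simp
    then obtain y where "y \<in> (\<lambda>x. Re (f x)) ` B" "M - e n < y"
      unfolding M_def by (rule less_cSupE) (use B0 in auto)
    then show "\<exists>x. x \<in> B \<and> M - e n < Re (f x)" by blast
  qed
  then obtain xs where xsB: "\<And>n. xs n \<in> B" and xsM: "\<And>n. M - e n < Re (f (xs n))" by metis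
  have xs1: "norm (xs n) \<le> 1" for n using xsB[of n] by (simp add: B_def)
  have dist_est: "(norm (xs m - xs n))^2 \<le> 4 * (e m + e n) / M" for m n
  proof -
    let ?u = "xs m" and ?v = "xs n" and ?d = "e m + e n"
    have par: "(norm (?u - ?v))^2 = 2 * (norm ?u)^2 + 2 * (norm ?v)^2 - (norm (?u + ?v))^2"
      using norm_add_sq[of ?u ?v] norm_diff_sq[of ?u ?v] by simp
    have "2 * M - ?d < Re (f (?u + ?v))" using xsM[of m] xsM[of n] by (simp add: add)
    also have "\<dots> \<le> M * norm (?u + ?v)" by (rule Pm)
    finally have "2 - ?d / M < norm (?u + ?v)" using Mpos by (simp add: field_simps)
    then have sq: "4 - 4 * (?d / M) \<le> (norm (?u + ?v))^2"
    proof (cases "2 - ?d / M \<le> 0")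
      case True then show ?thesis by (smt (verit) zero_le_power2)
    next
      case False
      then have "(2 - ?d / M)^2 \<le> (norm (?u + ?v))^2"
        using \<open>2 - ?d / M < norm (?u + ?v)\<close> by (intro power_mono) auto
      moreover have "4 - 4 * (?d / M) \<le> (2 - ?d / M)^2"
        using zero_le_power2[of "?d / M"] unfolding power2_diff by simp
      ultimately show ?thesis by linarith
    qed
    have "(norm ?u)^2 \<le> 1" "(norm ?v)^2 \<le> 1" using xs1[of m] xs1[of n] by (simp_all add: power_le_one)
    then show ?thesis using par sq by simp
  qed
  have "Cauchy xs"
  proof (rule metric_CauchyI)
    fix eps :: real assume eps: "eps > 0"
    obtain N :: nat where N: "8 / (M * eps^2) < real N" using reals_Archimedean2 by blast
    have "\<forall>m\<ge>N. \<forall>n\<ge>N. dist (xs m) (xs n) < eps"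
    proof (intro allI impI)
      fix m n assume mn: "m \<ge> N" "n \<ge> N"
      have em: "e m \<le> inverse (real (Suc N))" "e n \<le> inverse (real (Suc N))"
        using mn by (simp_all add: e_def le_imp_inverse_le)
      have "(dist (xs m) (xs n))^2 \<le> 4 * (e m + e n) / M" using dist_est[of m n] by (simp add: dist_norm)
      also have "\<dots> \<le> 8 * inverse (real (Suc N)) / M" using em Mpos by (simp add: divide_right_mono)
      also have "\<dots> < eps^2"
      proof -
        have "8 / (M * eps^2) < real (Suc N)" using N by simp
        then have "8 < real (Suc N) * (M * eps^2)" using Mpos eps by (simp add: divide_less_eq)
        then have "8 < eps^2 * (real (Suc N) * M)" by (simp add: algebra_simps)
        moreover have "8 * inverse (real (Suc N)) / M = 8 / (real (Suc N) * M)" by (simp add: field_simps)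
        moreover have "real (Suc N) * M > 0" using Mpos by simp
        ultimately show ?thesis by (simp add: pos_divide_less_eq)
      qed
      finally show "dist (xs m) (xs n) < eps" using eps by (simp add: power_less_imp_less_base)
    qed
    then show "\<exists>N. \<forall>m\<ge>N. \<forall>n\<ge>N. dist (xs m) (xs n) < eps" by blast
  qed
  then obtain z where lim: "xs \<longlonglongrightarrow> z" using Cauchy_convergent_iff convergent_def by blast
  have nz: "norm z \<le> 1"
    by (rule LIMSEQ_le_const2[OF tendsto_norm[OF lim]]) (use xs1 in auto)
  have fz_le: "Re (f z) \<le> M" using Pm[of z] nz Mpos by (smt (verit) mult_left_le)
  have fz_ge: "M \<le> Re (f z)"
  proof (rule tendsto_le[OF trivial_limit_sequentially])
    show "(\<lambda>n. Re (f (xs n))) \<longlonglongrightarrow> Re (f z)"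
      by (intro tendsto_Re bounded_linear.tendsto[OF blin lim])
    show "(\<lambda>n. M - e n) \<longlonglongrightarrow> M"
      using tendsto_diff[OF tendsto_const LIMSEQ_inverse_real_of_nat] by (simp add: e_def)
    show "\<forall>\<^sub>F n in sequentially. M - e n \<le> Re (f (xs n))" using xsM by (simp add: less_imp_le)
  qed
  have fz: "Re (f z) = M" using fz_le fz_ge by simp
  have var: "Re (f x) = M * Re (cinner z x)" for x
  proof -
    define a where "a = Re (f x)"
    define c where "c = Re (cinner z x)"
    define k where "k = M * (norm x)^2 / 2"
    have k0: "k \<ge> 0" using Mpos by (simp add: k_def)
    have main: "t * (a - M * c) \<le> k * t^2" for t
    proof -
      have "M + t * a = Re (f (z + scaleR t x))" by (simp add: add fR fz a_def)
      also have "\<dots> \<le> M * norm (z + scaleR t x)" by (rule Pm)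
      also have "\<dots> \<le> M * ((1 + (norm (z + scaleR t x))^2) / 2)"
        using Mpos norm_le_half_sq by (simp add: mult_left_mono)
      also have "(norm (z + scaleR t x))^2 = (norm z)^2 + 2 * t * c + t^2 * (norm x)^2"
        by (simp add: norm_add_sq cinner_scaleR_right c_def power_mult_distrib)
      also have "\<dots> \<le> 1 + 2 * t * c + t^2 * (norm x)^2"
        using nz by (simp add: power_le_one)
      finally have "M + t * a \<le> M * ((1 + (1 + 2 * t * c + t^2 * (norm x)^2)) / 2)"
        using Mpos by (smt (verit) mult_left_mono divide_right_mono)
      then show ?thesis by (simp add: k_def algebra_simps power2_eq_square)
    qed
    have le1: "a - M * c \<le> 0"
    proof (rule le_eps_aux[OF _ k0])
      fix t :: real assume t: "t > 0"
      have "t * (a - M * c) \<le> t * (k * t)" using main[of t] by (simp add: power2_eq_square mult.assoc mult.left_commute)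
      then show "a - M * c \<le> k * t" using t by simp
    qed
    have le2: "M * c - a \<le> 0"
    proof (rule le_eps_aux[OF _ k0])
      fix t :: real assume t: "t > 0"
      have "(-t) * (a - M * c) \<le> k * (-t)^2" by (rule main)
      then have "t * (M * c - a) \<le> t * (k * t)" by (simp add: power2_eq_square algebra_simps)
      then show "M * c - a \<le> k * t" using t by simp
    qed
    show ?thesis using le1 le2 by (simp add: a_def c_def)
  qed
  have "f x = cinner (scaleC (complex_of_real M) z) x" for x
  proof -
    have re: "Re (f x) = M * Re (cinner z x)" by (rule var)
    have "Re (f (scaleC (- \<i>) x)) = M * Re (cinner z (scaleC (- \<i>) x))" by (rule var)
    then have im: "Im (f x) = M * Im (cinner z x)" by (simp add: sc cinner_scaleC_right)
    show ?thesis using re im by (simp add: cinner_scaleC_left complex_eq_iff)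
  qed
  then show ?thesis by blast
qed



definition clin :: "('h::complex_hilbert \<Rightarrow> 'h) \<Rightarrow> bool" where
  "clin T \<longleftrightarrow> (\<forall>x y. T (x + y) = T x + T y) \<and> (\<forall>a x. T (scaleC a x) = scaleC a (T x))"

definition bnd :: "real \<Rightarrow> ('h::complex_hilbert \<Rightarrow> 'h) \<Rightarrow> bool" where
  "bnd K T \<longleftrightarrow> (\<forall>x. norm (T x) \<le> K * norm x)"

definition is_adj :: "('h::complex_hilbert \<Rightarrow> 'h) \<Rightarrow> ('h \<Rightarrow> 'h) \<Rightarrow> bool" where
  "is_adj T S \<longleftrightarrow> (\<forall>x y. cinner (T x) y = cinner x (S y))"

lemma BH_iff: "T \<in> BH \<longleftrightarrow> clin T \<and> (\<exists>K. bnd K T)"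
  unfolding BH_def bounded_clinear_op_def clin_def bnd_def by (auto simp: mult.commute)

lemma clin_add: "clin T \<Longrightarrow> T (x + y) = T x + T y" by (simp add: clin_def)
lemma clin_scaleC: "clin T \<Longrightarrow> T (scaleC a x) = scaleC a (T x)" by (simp add: clin_def)
lemma clin_scaleR: "clin T \<Longrightarrow> T (scaleR r x) = scaleR r (T x)"
  by (simp add: clin_def scaleR_scaleC)
lemma clin_zero: "clin T \<Longrightarrow> T 0 = 0"
  using clin_add[of T 0 0] by simp
lemma clin_minus: "clin T \<Longrightarrow> T (- x) = - T x"
  using clin_scaleR[of T "-1" x] by simp
lemma clin_diff: "clin T \<Longrightarrow> T (x - y) = T x - T y"
  using clin_add[of T x "-y"] clin_minus[of T y] by simp

lemma bnd_nonneg: "bnd K T \<Longrightarrow> bnd (max K 0) T"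
  unfolding bnd_def by (meson max.cobounded1 mult_right_mono norm_ge_zero order_trans)

lemma bndD: "bnd K T \<Longrightarrow> norm (T x) \<le> K * norm x" by (simp add: bnd_def)

lemma clin_blin: "clin T \<Longrightarrow> bnd K T \<Longrightarrow> bounded_linear T"
  by (rule bounded_linear_intro[where K=K]) (simp_all add: clin_add clin_scaleR bndD mult.commute)

lemma cinner_ext: assumes "\<And>x. cinner x u = cinner x v" shows "u = v"
proof -
  have "cinner (u - v) (u - v) = 0" using assms[of "u - v"] by (simp add: cinner_diff_right)
  then have "u - v = 0" using cinner_eq_zero_iff by blast
  then show ?thesis by simp
qed

lemma adj_eq: assumes "is_adj T S" shows "adj T = S"
  unfolding adj_def
proof (rule the_equality)
  show "\<forall>x y. cinner (T x) y = cinner x (S y)" using assms by (simp add: is_adj_def)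
  fix S' assume h: "\<forall>x y. cinner (T x) y = cinner x (S' y)"
  show "S' = S"
  proof
    fix y show "S' y = S y" using h assms by (intro cinner_ext) (simp add: is_adj_def)
  qed
qed

lemma is_adj_sym: assumes "is_adj T S" shows "is_adj S T"
  unfolding is_adj_def
proof (intro allI)
  fix x y
  have "cinner (S x) y = cnj (cinner y (S x))" by (rule cinner_commute)
  also have "\<dots> = cnj (cinner (T y) x)" using assms by (simp add: is_adj_def)
  also have "\<dots> = cinner x (T y)" by (simp add: cinner_commute[of x "T y"])
  finally show "cinner (S x) y = cinner x (T y)" .
qed

lemma adj_clin: assumes "is_adj T S" shows "clin S"
  unfolding clin_def
proof (intro conjI allI)
  fix y1 y2
  show "S (y1 + y2) = S y1 + S y2"
  proof (rule cinner_ext)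
    fix x
    have "cinner x (S (y1 + y2)) = cinner (T x) (y1 + y2)" using assms by (simp add: is_adj_def)
    also have "\<dots> = cinner (T x) y1 + cinner (T x) y2" by (rule cinner_add_right)
    also have "\<dots> = cinner x (S y1) + cinner x (S y2)" using assms by (simp add: is_adj_def)
    also have "\<dots> = cinner x (S y1 + S y2)" by (rule cinner_add_right[symmetric])
    finally show "cinner x (S (y1 + y2)) = cinner x (S y1 + S y2)" .
  qed
next
  fix a y
  show "S (scaleC a y) = scaleC a (S y)"
  proof (rule cinner_ext)
    fix x
    have "cinner x (S (scaleC a y)) = cinner (T x) (scaleC a y)" using assms by (simp add: is_adj_def)
    also have "\<dots> = a * cinner (T x) y" by (rule cinner_scaleC_right)
    also have "\<dots> = a * cinner x (S y)" using assms by (simp add: is_adj_def)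
    also have "\<dots> = cinner x (scaleC a (S y))" by (rule cinner_scaleC_right[symmetric])
    finally show "cinner x (S (scaleC a y)) = cinner x (scaleC a (S y))" .
  qed
qed

lemma adj_bnd: assumes "is_adj T S" "bnd K T" "K \<ge> 0" shows "bnd K S"
  unfolding bnd_def
proof
  fix y
  show "norm (S y) \<le> K * norm y"
  proof (cases "norm (S y) = 0")
    case True then show ?thesis using assms(3) by simp
  next
    case False
    have "(norm (S y))^2 = Re (cinner (S y) (S y))" by (rule norm_sq_cinner)
    also have "cinner (S y) (S y) = cinner (T (S y)) y" using assms(1) by (simp add: is_adj_def)
    also have "Re \<dots> \<le> cmod \<dots>" by (rule complex_Re_le_cmod)
    also have "\<dots> \<le> norm (T (S y)) * norm y" by (rule cinner_cs)
    also have "\<dots> \<le> K * norm (S y) * norm y" using bndD[OF assms(2)] by (simp add: mult_right_mono)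
    finally have "norm (S y) * norm (S y) \<le> norm (S y) * (K * norm y)" by (simp add: power2_eq_square algebra_simps)
    then show ?thesis using False by (simp add: mult_le_cancel_left)
  qed
qed

lemma adj_exists: assumes "T \<in> BH" shows "is_adj T (adj T)"
proof -
  from assms obtain K where lin: "clin T" and K: "bnd K T" by (auto simp: BH_iff)
  have "\<forall>y. \<exists>z. \<forall>x. cinner y (T x) = cinner z x"
  proof
    fix y
    show "\<exists>z. \<forall>x. cinner y (T x) = cinner z x"
    proof (rule riesz[where K="norm y * K"])
      show "cinner y (T (x1 + x2)) = cinner y (T x1) + cinner y (T x2)" for x1 x2
        by (simp add: clin_add[OF lin] cinner_add_right)
      show "cinner y (T (scaleC a x)) = a * cinner y (T x)" for a x
        by (simp add: clin_scaleC[OF lin] cinner_scaleC_right)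
      show "cmod (cinner y (T x)) \<le> norm y * K * norm x" for x
        using cinner_cs[of y "T x"] bndD[OF K, of x]
        by (smt (verit) mult.assoc mult_left_mono norm_ge_zero)
    qed
  qed
  then obtain S where S: "\<And>y x. cinner y (T x) = cinner (S y) x" by metis
  have "is_adj T S"
    unfolding is_adj_def
  proof (intro allI)
    fix x y
    have "cinner (T x) y = cnj (cinner y (T x))" by (rule cinner_commute)
    also have "\<dots> = cnj (cinner (S y) x)" by (simp add: S)
    also have "\<dots> = cinner x (S y)" by (simp add: cinner_commute[of x "S y"])
    finally show "cinner (T x) y = cinner x (S y)" .
  qed
  then show ?thesis using adj_eq by metis
qed

lemma adj_BH: assumes "T \<in> BH" shows "adj T \<in> BH"
proof -
  from assms obtain K where K: "bnd K T" by (auto simp: BH_iff)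
  have a: "is_adj T (adj T)" by (rule adj_exists[OF assms])
  show ?thesis unfolding BH_iff
    using adj_clin[OF a] adj_bnd[OF a bnd_nonneg[OF K]] by auto
qed



primrec sqiter :: "('h::complex_hilbert \<Rightarrow> 'h) \<Rightarrow> nat \<Rightarrow> 'h \<Rightarrow> 'h" where
  "sqiter A 0 = (\<lambda>x. 0)"
| "sqiter A (Suc k) = (\<lambda>x. scaleR (1/2) (A (A x) + sqiter A k (sqiter A k x)))"

declare sqiter.simps[simp del]

context complex_hilbert begin
subclass banach ..
end

lemma clin_comp_scaleR_sum:
  assumes "clin A"
  shows "A (scaleR c (u + v)) = scaleR c (A u + A v)"
  using assms by (simp add: clin_scaleR clin_add)

locale sqrt_setup =
  fixes A :: "'h::complex_hilbert \<Rightarrow> 'h" and r :: real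
  assumes linA: "clin A" and bndA: "bnd r A" and r0: "0 \<le> r" and r1: "r < 1"
    and saA: "is_adj A A"
begin

abbreviation "X \<equiv> sqiter A"

lemma X_props: "clin (X k) \<and> bnd r (X k) \<and> is_adj (X k) (X k) \<and> (\<forall>x. X k (A x) = A (X k x))"
proof (induction k)
  case 0
  show ?case using r0 linA by (simp add: sqiter.simps clin_def bnd_def is_adj_def clin_zero)
next
  case (Suc k)
  then have l: "clin (X k)" and b: "bnd r (X k)" and s: "is_adj (X k) (X k)"
    and c: "\<And>x. X k (A x) = A (X k x)" by auto
  have l': "clin (X (Suc k))"
    unfolding clin_def
    by (simp add: sqiter.simps clin_add[OF linA] clin_add[OF l] clin_scaleC[OF linA] clin_scaleC[OF l]
        scaleC_add_right scaleC_scaleR_comm algebra_simps)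
  have b': "bnd r (X (Suc k))"
    unfolding bnd_def
  proof
    fix x
    have "norm (X (Suc k) x) \<le> (1/2) * (norm (A (A x)) + norm (X k (X k x)))"
      by (simp add: sqiter.simps norm_triangle_ineq)
    also have "norm (A (A x)) \<le> r * (r * norm x)"
      using bndD[OF bndA, of "A x"] bndD[OF bndA, of x] r0 by (meson mult_left_mono order_trans)
    also have "norm (X k (X k x)) \<le> r * (r * norm x)"
      using bndD[OF b, of "X k x"] bndD[OF b, of x] r0 by (meson mult_left_mono order_trans)
    also have "(1/2) * (r * (r * norm x) + r * (r * norm x)) = r * (r * norm x)" by simp
    also have "\<dots> \<le> r * norm x" using r0 r1 by (simp add: mult_left_le_one_le mult_nonneg_nonneg)
    finally show "norm (X (Suc k) x) \<le> r * norm x" by simp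
  qed
  have s': "is_adj (X (Suc k)) (X (Suc k))"
    unfolding is_adj_def
  proof (intro allI)
    fix x y
    have e1: "cinner (A (A x)) y = cinner x (A (A y))" using saA by (simp add: is_adj_def)
    have e2: "cinner (X k (X k x)) y = cinner x (X k (X k y))" using s by (simp add: is_adj_def)
    show "cinner (X (Suc k) x) y = cinner x (X (Suc k) y)"
      by (simp add: sqiter.simps cinner_scaleR_left cinner_scaleR_right cinner_add_left cinner_add_right e1 e2)
  qed
  have c': "X (Suc k) (A x) = A (X (Suc k) x)" for x
    by (simp add: sqiter.simps c clin_scaleR[OF linA] clin_add[OF linA])
  show ?case using l' b' s' c' by blast
qed

lemma X_clin: "clin (X k)" using X_props by blast
lemma X_bnd: "bnd r (X k)" using X_props by blast
lemma X_sa: "is_adj (X k) (X k)" using X_props by blast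
lemma X_comm: "X k (A x) = A (X k x)" using X_props by blast

lemma X_comm_Suc: "X (Suc k) (X k x) = X k (X (Suc k) x)"
proof -
  have "X k (A (A x)) = A (A (X k x))" by (simp add: X_comm)
  then show ?thesis by (simp add: sqiter.simps clin_scaleR[OF X_clin] clin_add[OF X_clin])
qed

lemma X_diff: "norm (X (Suc k) x - X k x) \<le> r ^ k * norm x"
proof (induction k arbitrary: x)
  case 0
  have "norm (A (A x)) \<le> r * (r * norm x)"
    using bndD[OF bndA, of "A x"] bndD[OF bndA, of x] r0 by (meson mult_left_mono order_trans)
  also have "\<dots> \<le> norm x" using mult_left_le_one_le[of "norm x" "r*r"] r0 r1
    by (simp add: mult.assoc mult_le_one)
  finally show ?case by (simp add: sqiter.simps) (smt (verit) norm_ge_zero)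
next
  case (Suc k)
  let ?d = "X (Suc k) x - X k x"
  have lk: "clin (X k)" and lk1: "clin (X (Suc k))" by (rule X_clin)+
  have "X (Suc (Suc k)) x - X (Suc k) x
        = scaleR (1/2) (A (A x) + X (Suc k) (X (Suc k) x)) - scaleR (1/2) (A (A x) + X k (X k x))"
    by (simp only: sqiter.simps(2)[of A "Suc k"] sqiter.simps(2)[of A k])
  also have "\<dots> = scaleR (1/2) (X (Suc k) (X (Suc k) x) - X k (X k x))"
    by (simp add: algebra_simps)
  also have "X (Suc k) (X (Suc k) x) - X k (X k x) = X (Suc k) ?d + X k ?d"
    using X_comm_Suc[of k x] by (simp add: clin_diff[OF lk] clin_diff[OF lk1] algebra_simps)
  finally have eq: "X (Suc (Suc k)) x - X (Suc k) x = scaleR (1/2) (X (Suc k) ?d + X k ?d)" .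
  have "norm (X (Suc (Suc k)) x - X (Suc k) x) \<le> (1/2) * (norm (X (Suc k) ?d) + norm (X k ?d))"
    unfolding eq by (simp add: norm_triangle_ineq)
  also have "\<dots> \<le> (1/2) * (r * norm ?d + r * norm ?d)"
    using bndD[OF X_bnd, of "Suc k" ?d] bndD[OF X_bnd, of k ?d] by simp
  also have "\<dots> = r * norm ?d" by simp
  also have "\<dots> \<le> r * (r ^ k * norm x)" using Suc.IH[of x] r0 by (simp add: mult_left_mono)
  finally show ?case by simp
qed

definition Y :: "'h \<Rightarrow> 'h" where "Y x = (\<Sum>k. X (Suc k) x - X k x)"

lemma Y_lim: "(\<lambda>n. X n x) \<longlonglongrightarrow> Y x"
proof -
  have "summable (\<lambda>k. r ^ k * norm x)" using r0 r1 by (simp add: summable_mult2)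
  then have "summable (\<lambda>k. norm (X (Suc k) x - X k x))"
    by (rule summable_comparison_test'[where N=0]) (simp add: X_diff)
  then have "summable (\<lambda>k. X (Suc k) x - X k x)" by (rule summable_norm_cancel)
  then have "(\<lambda>n. \<Sum>k<n. X (Suc k) x - X k x) \<longlonglongrightarrow> Y x" unfolding Y_def by (rule summable_LIMSEQ)
  moreover have "(\<Sum>k<n. X (Suc k) x - X k x) = X n x" for n
    using sum_lessThan_telescope[of "\<lambda>k. X k x" n] by (simp add: sqiter.simps)
  ultimately show ?thesis by simp
qed

lemma Y_clin: "clin Y"
  unfolding clin_def
proof (intro conjI allI)
  fix x y
  have "(\<lambda>n. X n (x + y)) \<longlonglongrightarrow> Y x + Y y"
    using tendsto_add[OF Y_lim[of x] Y_lim[of y]] by (simp add: clin_add[OF X_clin])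
  then show "Y (x + y) = Y x + Y y" using Y_lim LIMSEQ_unique by blast
next
  fix a x
  have "(\<lambda>n. X n (scaleC a x)) \<longlonglongrightarrow> scaleC a (Y x)"
    using bounded_linear.tendsto[OF bounded_linear_scaleC Y_lim[of x]] by (simp add: clin_scaleC[OF X_clin])
  then show "Y (scaleC a x) = scaleC a (Y x)" using Y_lim LIMSEQ_unique by blast
qed

lemma Y_bnd: "bnd r Y"
  unfolding bnd_def
proof
  fix x
  show "norm (Y x) \<le> r * norm x"
    by (rule LIMSEQ_le_const2[OF tendsto_norm[OF Y_lim[of x]]]) (simp add: bndD[OF X_bnd])
qed

lemma Y_sa: "is_adj Y Y"
  unfolding is_adj_def
proof (intro allI)
  fix x y
  have "(\<lambda>n. cinner (X n x) y) \<longlonglongrightarrow> cinner (Y x) y"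
    by (rule bounded_linear.tendsto[OF bounded_linear_cinner_left Y_lim])
  moreover have "(\<lambda>n. cinner x (X n y)) \<longlonglongrightarrow> cinner x (Y y)"
    by (rule bounded_linear.tendsto[OF bounded_linear_cinner_right Y_lim])
  moreover have "cinner (X n x) y = cinner x (X n y)" for n using X_sa by (simp add: is_adj_def)
  ultimately show "cinner (Y x) y = cinner x (Y y)" using LIMSEQ_unique by fastforce
qed

lemma A_blin: "bounded_linear A" by (rule clin_blin[OF linA bndA])

lemma Y_comm: "Y (A x) = A (Y x)"
proof -
  have "(\<lambda>n. A (X n x)) \<longlonglongrightarrow> A (Y x)" by (rule bounded_linear.tendsto[OF A_blin Y_lim])
  then have "(\<lambda>n. X n (A x)) \<longlonglongrightarrow> A (Y x)" by (simp add: X_comm)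
  then show ?thesis using Y_lim LIMSEQ_unique by blast
qed

lemma Y_fix: "Y x = scaleR (1/2) (A (A x) + Y (Y x))"
proof -
  have h0: "(\<lambda>n. X n (X n x) - Y (Y x)) \<longlonglongrightarrow> 0"
  proof -
    have eq: "X n (X n x) - Y (Y x) = X n (X n x - Y x) + (X n (Y x) - Y (Y x))" for n
      by (simp add: clin_diff[OF X_clin])
    have t1: "(\<lambda>n. X n (X n x - Y x)) \<longlonglongrightarrow> 0"
    proof (rule Lim_null_comparison)
      show "\<forall>\<^sub>F n in sequentially. norm (X n (X n x - Y x)) \<le> r * norm (X n x - Y x)"
        by (simp add: bndD[OF X_bnd])
      have "(\<lambda>n. X n x - Y x) \<longlonglongrightarrow> 0" using Y_lim[of x] by (simp add: LIM_zero)
      then show "(\<lambda>n. r * norm (X n x - Y x)) \<longlonglongrightarrow> 0"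
        using tendsto_mult_right_zero tendsto_norm_zero by blast
    qed
    have t2: "(\<lambda>n. X n (Y x) - Y (Y x)) \<longlonglongrightarrow> 0" using Y_lim[of "Y x"] by (simp add: LIM_zero)
    show ?thesis using tendsto_add[OF t1 t2] by (simp add: eq)
  qed
  have "(\<lambda>n. X n (X n x)) \<longlonglongrightarrow> Y (Y x)"
    using tendsto_add[OF h0 tendsto_const[of "Y (Y x)"]] by simp
  then have "(\<lambda>n. X (Suc n) x) \<longlonglongrightarrow> scaleR (1/2) (A (A x) + Y (Y x))"
    by (simp add: sqiter.simps tendsto_scaleR tendsto_add)
  moreover have "(\<lambda>n. X (Suc n) x) \<longlonglongrightarrow> Y x" using Y_lim[of x] by (rule LIMSEQ_Suc)
  ultimately show ?thesis using LIMSEQ_unique by blast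
qed

definition B :: "'h \<Rightarrow> 'h" where "B x = x - Y x"

lemma B_clin: "clin B"
  unfolding clin_def B_def by (simp add: clin_add[OF Y_clin] clin_scaleC[OF Y_clin] scaleC_diff_right)

lemma B_bnd: "bnd (1 + r) B"
  unfolding bnd_def B_def
proof
  fix x
  have "norm (x - Y x) \<le> norm x + norm (Y x)" by (rule norm_triangle_ineq4)
  also have "\<dots> \<le> norm x + r * norm x" using bndD[OF Y_bnd, of x] by simp
  finally show "norm (x - Y x) \<le> (1 + r) * norm x" by (simp add: algebra_simps)
qed

lemma B_sa: "is_adj B B"
  using Y_sa unfolding is_adj_def B_def by (simp add: cinner_diff_left cinner_diff_right)

lemma B_comm: "B (A x) = A (B x)"
  unfolding B_def by (simp add: Y_comm clin_diff[OF linA])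

lemma B_sq: "B (B x) = x - A (A x)"
proof -
  have "B (B x) = x - Y x - (Y x - Y (Y x))" unfolding B_def by (simp add: clin_diff[OF Y_clin])
  also have "Y (Y x) = scaleR 2 (Y x) - A (A x)"
  proof -
    have "scaleR 2 (Y x) = A (A x) + Y (Y x)" using arg_cong[OF Y_fix[of x], of "scaleR 2"] by simp
    then show ?thesis by simp
  qed
  finally show ?thesis by (simp add: algebra_simps scaleR_2)
qed

end



lemma BH_op_add: "T \<in> BH \<Longrightarrow> S \<in> BH \<Longrightarrow> op_add T S \<in> BH"
proof -
  assume "T \<in> BH" "S \<in> BH"
  then obtain K1 K2 where l: "clin T" "clin S" and b: "bnd K1 T" "bnd K2 S" by (auto simp: BH_iff)
  have "clin (op_add T S)" using l
    by (simp add: clin_def op_add_def scaleC_add_right algebra_simps)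
  moreover have "bnd (K1 + K2) (op_add T S)"
    unfolding bnd_def op_add_def
  proof
    fix x
    have "norm (T x + S x) \<le> norm (T x) + norm (S x)" by (rule norm_triangle_ineq)
    also have "\<dots> \<le> K1 * norm x + K2 * norm x" using bndD[OF b(1)] bndD[OF b(2)] by (rule add_mono)
    finally show "norm (T x + S x) \<le> (K1 + K2) * norm x" by (simp add: algebra_simps)
  qed
  ultimately show ?thesis by (auto simp: BH_iff)
qed

lemma BH_op_scale: "T \<in> BH \<Longrightarrow> op_scale a T \<in> BH"
proof -
  assume "T \<in> BH"
  then obtain K where l: "clin T" and b: "bnd K T" by (auto simp: BH_iff)
  have "clin (op_scale a T)" using l
    by (simp add: clin_def op_scale_def scaleC_add_right scaleC_scaleC mult.commute)
  moreover have "bnd (cmod a * K) (op_scale a T)"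
    unfolding bnd_def op_scale_def using bndD[OF b]
    by (simp add: norm_scaleC mult.assoc mult_left_mono)
  ultimately show ?thesis by (auto simp: BH_iff)
qed

lemma BH_comp: "T \<in> BH \<Longrightarrow> S \<in> BH \<Longrightarrow> T \<circ> S \<in> BH"
proof -
  assume "T \<in> BH" "S \<in> BH"
  then obtain K1 K2 where l: "clin T" "clin S" and b: "bnd K1 T" "bnd K2 S" by (auto simp: BH_iff)
  have b1: "bnd (max K1 0) T" by (rule bnd_nonneg[OF b(1)])
  have "clin (T \<circ> S)" using l by (simp add: clin_def)
  moreover have "bnd (max K1 0 * K2) (T \<circ> S)"
    unfolding bnd_def
  proof
    fix x
    have "norm (T (S x)) \<le> max K1 0 * norm (S x)" by (rule bndD[OF b1])
    also have "\<dots> \<le> max K1 0 * (K2 * norm x)" using bndD[OF b(2)] by (simp add: mult_left_mono)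
    finally show "norm ((T \<circ> S) x) \<le> max K1 0 * K2 * norm x" by (simp add: mult.assoc)
  qed
  ultimately show ?thesis by (auto simp: BH_iff)
qed

context sqrt_setup begin

definition W :: "'h \<Rightarrow> 'h" where "W x = A x + scaleC \<i> (B x)"
definition V :: "'h \<Rightarrow> 'h" where "V x = A x - scaleC \<i> (B x)"

lemma W_clin: "clin W"
  unfolding clin_def W_def
  by (simp add: clin_add[OF linA] clin_add[OF B_clin] clin_scaleC[OF linA] clin_scaleC[OF B_clin]
      scaleC_add_right scaleC_scaleC mult.commute)

lemma V_clin: "clin V"
  unfolding clin_def V_def
  by (simp add: clin_add[OF linA] clin_add[OF B_clin] clin_scaleC[OF linA] clin_scaleC[OF B_clin]
      scaleC_add_right scaleC_diff_right scaleC_scaleC mult.commute)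

lemma W_bnd: "bnd (1 + 2 * r) W"
  unfolding bnd_def W_def
proof
  fix x
  have "norm (A x + scaleC \<i> (B x)) \<le> norm (A x) + norm (scaleC \<i> (B x))" by (rule norm_triangle_ineq)
  also have "\<dots> \<le> r * norm x + (1 + r) * norm x"
    using bndD[OF bndA, of x] bndD[OF B_bnd, of x] by (simp add: norm_scaleC)
  finally show "norm (A x + scaleC \<i> (B x)) \<le> (1 + 2 * r) * norm x" by (simp add: algebra_simps)
qed

lemma V_bnd: "bnd (1 + 2 * r) V"
  unfolding bnd_def V_def
proof
  fix x
  have "norm (A x - scaleC \<i> (B x)) \<le> norm (A x) + norm (scaleC \<i> (B x))" by (rule norm_triangle_ineq4)
  also have "\<dots> \<le> r * norm x + (1 + r) * norm x"
    using bndD[OF bndA, of x] bndD[OF B_bnd, of x] by (simp add: norm_scaleC)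
  finally show "norm (A x - scaleC \<i> (B x)) \<le> (1 + 2 * r) * norm x" by (simp add: algebra_simps)
qed

lemma W_adj: "is_adj W V"
  unfolding is_adj_def
proof (intro allI)
  fix x y
  have a: "cinner (A x) y = cinner x (A y)" using saA by (simp add: is_adj_def)
  have b: "cinner (B x) y = cinner x (B y)" using B_sa by (simp add: is_adj_def)
  show "cinner (W x) y = cinner x (V y)"
    by (simp add: W_def V_def cinner_add_left cinner_scaleC_left cinner_diff_right cinner_scaleC_right a b)
qed

lemma scaleC_ii: "scaleC \<i> (scaleC \<i> v) = - v"
  by (simp add: scaleC_scaleC scaleC_minus_left scaleC_one)

lemma VW: "V (W x) = x"
proof -
  have "V (W x) = A (A x) + scaleC \<i> (A (B x)) - scaleC \<i> (B (A x)) - scaleC \<i> (scaleC \<i> (B (B x)))"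
    by (simp add: W_def V_def clin_add[OF linA] clin_add[OF B_clin] clin_scaleC[OF linA]
        clin_scaleC[OF B_clin] scaleC_add_right)
  also have "\<dots> = x" by (simp add: scaleC_ii B_comm B_sq)
  finally show ?thesis .
qed

lemma WV: "W (V x) = x"
proof -
  have "W (V x) = A (A x) - scaleC \<i> (A (B x)) + scaleC \<i> (B (A x)) - scaleC \<i> (scaleC \<i> (B (B x)))"
    by (simp add: W_def V_def clin_diff[OF linA] clin_diff[OF B_clin] clin_scaleC[OF linA]
        clin_scaleC[OF B_clin] scaleC_diff_right)
  also have "\<dots> = x" by (simp add: scaleC_ii B_comm B_sq)
  finally show ?thesis .
qed

lemma unitary_decomp: "W \<in> unitaries \<and> V \<in> unitaries \<and> A = op_scale (1/2) (op_add W V)"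
proof (intro conjI)
  have WB: "W \<in> BH" using W_clin W_bnd by (auto simp: BH_iff)
  have VB: "V \<in> BH" using V_clin V_bnd by (auto simp: BH_iff)
  have aW: "adj W = V" by (rule adj_eq[OF W_adj])
  have aV: "adj V = W" by (rule adj_eq[OF is_adj_sym[OF W_adj]])
  show "W \<in> unitaries" unfolding unitaries_def using WB aW VW WV by (auto simp: fun_eq_iff)
  show "V \<in> unitaries" unfolding unitaries_def using VB aV VW WV by (auto simp: fun_eq_iff)
  show "A = op_scale (1/2) (op_add W V)"
  proof
    fix x
    have "W x + V x = A x + A x" by (simp add: W_def V_def)
    also have "\<dots> = scaleC 2 (A x)" using scaleC_add_left[of 1 1 "A x"] by (simp add: scaleC_one)
    finally have "scaleC (1/2) (W x + V x) = A x" by (simp add: scaleC_scaleC scaleC_one)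
    then show "A x = op_scale (1/2) (op_add W V) x" by (simp add: op_scale_def op_add_def)
  qed
qed

end

lemma N_sa_le:
  fixes N :: "('h::complex_hilbert \<Rightarrow> 'h) \<Rightarrow> real" and A :: "'h \<Rightarrow> 'h"
  assumes nN: "is_norm_on_BH N" and sU: "\<And>U. U \<in> unitaries \<Longrightarrow> N U \<le> s"
    and lA: "clin A" and bA: "bnd 1 A" and saA: "is_adj A A"
  shows "N A \<le> s"
proof (rule field_le_mult_one_interval)
  fix z :: real assume z: "0 < z" "z < 1"
  define A' where "A' = op_scale (complex_of_real z) A"
  have AB: "A \<in> BH" using lA bA by (auto simp: BH_iff)
  have "sqrt_setup A' z"
  proof
    show "clin A'" unfolding A'_def using BH_op_scale[OF AB] by (simp add: BH_iff)
    show "bnd z A'" unfolding bnd_def A'_def op_scale_def using bndD[OF bA] z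
      by (simp add: norm_scaleC mult_left_mono)
    show "0 \<le> z" "z < 1" using z by auto
    show "is_adj A' A'" using saA unfolding is_adj_def A'_def op_scale_def
      by (simp add: cinner_scaleC_left cinner_scaleC_right)
  qed
  then interpret S: sqrt_setup A' z .
  have WU: "S.W \<in> unitaries" and VU: "S.V \<in> unitaries" and eq: "A' = op_scale (1/2) (op_add S.W S.V)"
    using S.unitary_decomp by auto
  have WB: "S.W \<in> BH" and VB: "S.V \<in> BH" using WU VU by (auto simp: unitaries_def)
  have "N A' = N (op_scale (1/2) (op_add S.W S.V))" using eq by simp
  also have "\<dots> = cmod (1/2) * N (op_add S.W S.V)" using nN BH_op_add[OF WB VB]
    unfolding is_norm_on_BH_def by blast
  also have "\<dots> \<le> (1/2) * (N S.W + N S.V)" using nN WB VB by (simp add: is_norm_on_BH_def)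
  also have "\<dots> \<le> (1/2) * (s + s)" using sU[OF WU] sU[OF VU] by simp
  finally have "N A' \<le> s" by simp
  moreover have "N A' = z * N A" using nN AB z by (simp add: is_norm_on_BH_def A'_def)
  ultimately show "z * N A \<le> s" by simp
qed



lemma bnd_onorm: assumes "T \<in> BH" "onorm T \<le> 1" shows "bnd 1 T"
proof -
  from assms(1) obtain K where l: "clin T" and b: "bnd K T" by (auto simp: BH_iff)
  have bl: "bounded_linear T" by (rule clin_blin[OF l b])
  show ?thesis unfolding bnd_def
  proof
    fix x
    have "norm (T x) \<le> onorm T * norm x" by (rule onorm[OF bl])
    also have "\<dots> \<le> 1 * norm x" using mult_right_mono[OF assms(2) norm_ge_zero[of x]] .
    finally show "norm (T x) \<le> 1 * norm x" .
  qed
qed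

lemma N_contraction_le:
  fixes N :: "('h::complex_hilbert \<Rightarrow> 'h) \<Rightarrow> real" and T :: "'h \<Rightarrow> 'h"
  assumes nN: "is_norm_on_BH N" and sU: "\<And>U. U \<in> unitaries \<Longrightarrow> N U \<le> s"
    and TB: "T \<in> BH" and bT: "bnd 1 T"
  shows "N T \<le> 2 * s"
proof -
  define Ts where "Ts = adj T"
  have aT: "is_adj T Ts" unfolding Ts_def by (rule adj_exists[OF TB])
  have TsB: "Ts \<in> BH" unfolding Ts_def by (rule adj_BH[OF TB])
  have bTs: "bnd 1 Ts" by (rule adj_bnd[OF aT bT]) simp
  have lT: "clin T" and lTs: "clin Ts" using TB TsB by (auto simp: BH_iff)
  define R where "R = op_scale (1/2) (op_add T Ts)"
  define J where "J = op_scale (- \<i> / 2) (op_add T (op_scale (-1) Ts))"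
  have RB: "R \<in> BH" unfolding R_def by (intro BH_op_scale BH_op_add TB TsB)
  have JB: "J \<in> BH" unfolding J_def by (intro BH_op_scale BH_op_add TB TsB)
  have a1: "cinner (T x) y = cinner x (Ts y)" for x y using aT by (simp add: is_adj_def)
  have a2: "cinner (Ts x) y = cinner x (T y)" for x y using is_adj_sym[OF aT] by (simp add: is_adj_def)
  have bnd_half: "bnd 1 (op_scale c (op_add T (op_scale d Ts)))" if "cmod c * (1 + cmod d) \<le> 1" for c d
    unfolding bnd_def op_scale_def op_add_def
  proof
    fix x
    have "norm (T x + scaleC d (Ts x)) \<le> norm (T x) + cmod d * norm (Ts x)"
      using norm_triangle_ineq[of "T x" "scaleC d (Ts x)"] by (simp add: norm_scaleC)
    also have "\<dots> \<le> norm x + cmod d * norm x"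
      using bndD[OF bT, of x] bndD[OF bTs, of x] by (simp add: add_mono mult_left_mono)
    finally have h: "norm (T x + scaleC d (Ts x)) \<le> (1 + cmod d) * norm x" by (simp add: algebra_simps)
    have "norm (scaleC c (T x + scaleC d (Ts x))) = cmod c * norm (T x + scaleC d (Ts x))" by (rule norm_scaleC)
    also have "\<dots> \<le> cmod c * ((1 + cmod d) * norm x)" using h by (simp add: mult_left_mono)
    also have "\<dots> \<le> 1 * norm x" using mult_right_mono[OF that norm_ge_zero[of x]] by (simp add: mult.assoc)
    finally show "norm (scaleC c (T x + scaleC d (Ts x))) \<le> 1 * norm x" .
  qed
  have "op_add T Ts = op_add T (op_scale 1 Ts)" by (simp add: op_scale_def scaleC_one)
  then have bR: "bnd 1 R" unfolding R_def using bnd_half[of "1/2" 1] by simp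
  have bJ: "bnd 1 J" unfolding J_def using bnd_half[of "- \<i> / 2" "-1"] by (simp add: norm_divide)
  have sR: "is_adj R R" unfolding is_adj_def R_def op_scale_def op_add_def
    by (simp add: cinner_scaleC_left cinner_scaleC_right cinner_add_left cinner_add_right a1 a2 add.commute)
  have sJ: "is_adj J J" unfolding is_adj_def J_def op_scale_def op_add_def
    by (simp add: cinner_scaleC_left cinner_scaleC_right cinner_add_left cinner_add_right a1 a2 algebra_simps)
  have lR: "clin R" and lJ: "clin J" using RB JB by (auto simp: BH_iff)
  have NR: "N R \<le> s" by (rule N_sa_le[OF nN sU lR bR sR])
  have NJ: "N J \<le> s" by (rule N_sa_le[OF nN sU lJ bJ sJ])
  have Teq: "T = op_add R (op_scale \<i> J)"
  proof
    fix x
    have "op_add R (op_scale \<i> J) x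
      = scaleC (1/2) (T x + Ts x) + scaleC (\<i> * (- \<i> / 2)) (T x + scaleC (-1) (Ts x))"
      by (simp add: R_def J_def op_scale_def op_add_def scaleC_scaleC)
    also have "\<dots> = scaleC (1/2) (T x) + scaleC (1/2) (T x)"
      by (simp add: scaleC_add_right scaleC_scaleC scaleC_minus_left scaleC_one scaleC_diff_right)
    also have "\<dots> = T x" by (simp add: scaleC_add_left[symmetric] scaleC_one)
    finally show "T x = op_add R (op_scale \<i> J) x" by simp
  qed
  have "N T \<le> N R + N (op_scale \<i> J)"
    using nN RB BH_op_scale[OF JB] Teq unfolding is_norm_on_BH_def by metis
  also have "N (op_scale \<i> J) = N J" using nN JB unfolding is_norm_on_BH_def by simp
  finally show ?thesis using NR NJ by simp
qed



theorem corollary2p7: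
  fixes N :: "('h::complex_hilbert \<Rightarrow> 'h) \<Rightarrow> real"
    and T :: "'h \<Rightarrow> 'h"
  assumes "algebra_norm N"
    and "self_adjoint_norm N"
    and "weakly_unitarily_invariant N"
    and "T \<in> BH"
    and "onorm T \<le> 1"
  shows "gen_num_radius N (\<lambda>x. T (adj T x) - adj T (T x))
           \<le> ereal (4 * N T) * (SUP U\<in>unitaries. ereal (N U))"
proof -
  have nN: "is_norm_on_BH N" and mult: "\<And>T S. T \<in> BH \<Longrightarrow> S \<in> BH \<Longrightarrow> N (T \<circ> S) \<le> N T * N S"
    using assms(1) by (auto simp: algebra_norm_def)
  have TB: "T \<in> BH" by (rule assms(4))
  have bT: "bnd 1 T" by (rule bnd_onorm[OF assms(4,5)])
  define Ts where "Ts = adj T"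
  have aT: "is_adj T Ts" unfolding Ts_def by (rule adj_exists[OF TB])
  have TsB: "Ts \<in> BH" unfolding Ts_def by (rule adj_BH[OF TB])
  have NTs: "N Ts = N T" using assms(2) TB unfolding self_adjoint_norm_def Ts_def by blast
  have NT0: "N T \<ge> 0" using nN TB unfolding is_norm_on_BH_def by blast
  have a1: "cinner (T x) y = cinner x (Ts y)" for x y using aT by (simp add: is_adj_def)
  have a2: "cinner (Ts x) y = cinner x (T y)" for x y using is_adj_sym[OF aT] by (simp add: is_adj_def)
  define C where "C = (\<lambda>x. T (Ts x) - Ts (T x))"
  have Ceq: "C = op_add (T \<circ> Ts) (op_scale (-1) (Ts \<circ> T))"
    by (simp add: C_def fun_eq_iff op_add_def op_scale_def scaleC_minus_left scaleC_one)
  have CB: "C \<in> BH" unfolding Ceq by (intro BH_op_add BH_op_scale BH_comp TB TsB)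
  have sC: "is_adj C C" unfolding is_adj_def C_def
    by (simp add: cinner_diff_left cinner_diff_right a1 a2)
  have NC: "N C \<le> 2 * (N T)^2"
  proof -
    have "N C \<le> N (T \<circ> Ts) + N (op_scale (-1) (Ts \<circ> T))"
      unfolding Ceq using nN BH_comp[OF TB TsB] BH_op_scale[OF BH_comp[OF TsB TB]]
      unfolding is_norm_on_BH_def by blast
    also have "N (op_scale (-1) (Ts \<circ> T)) = N (Ts \<circ> T)"
      using nN BH_comp[OF TsB TB] unfolding is_norm_on_BH_def by simp
    also have "N (T \<circ> Ts) + N (Ts \<circ> T) \<le> N T * N Ts + N Ts * N T"
      by (rule add_mono[OF mult[OF TB TsB] mult[OF TsB TB]])
    finally show ?thesis by (simp add: NTs power2_eq_square)
  qed
  have gen: "gen_num_radius N C \<le> ereal (N C)"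
    unfolding gen_num_radius_def
  proof (rule SUP_least)
    fix \<theta> :: real
    define e where "e = exp (\<i> * complex_of_real \<theta>)"
    have eB: "op_scale e C \<in> BH" by (rule BH_op_scale[OF CB])
    have "is_adj (op_scale e C) (op_scale (cnj e) C)"
      using sC unfolding is_adj_def op_scale_def by (simp add: cinner_scaleC_left cinner_scaleC_right)
    then have ad: "adj (op_scale e C) = op_scale (cnj e) C" by (rule adj_eq)
    have "ReOp (op_scale e C) = op_scale (complex_of_real (Re e)) C"
    proof
      fix x
      have "ReOp (op_scale e C) x = scaleC (1/2) (scaleC e (C x) + scaleC (cnj e) (C x))"
        unfolding ReOp_def ad by (simp add: op_add_def op_scale_def)
      also have "\<dots> = scaleC (1/2) (scaleC (e + cnj e) (C x))" by (simp only: scaleC_add_left)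
      also have "\<dots> = scaleC ((1/2) * (e + cnj e)) (C x)" by (rule scaleC_scaleC)
      also have "(1/2) * (e + cnj e) = complex_of_real (Re e)" by (simp add: complex_add_cnj)
      finally show "ReOp (op_scale e C) x = op_scale (complex_of_real (Re e)) C x" by (simp add: op_scale_def)
    qed
    then have "N (ReOp (op_scale e C)) = \<bar>Re e\<bar> * N C"
      using nN CB unfolding is_norm_on_BH_def by simp
    also have "\<dots> \<le> 1 * N C"
    proof (rule mult_right_mono)
      have "\<bar>Re e\<bar> \<le> cmod e" by (rule abs_Re_le_cmod)
      also have "cmod e = 1" by (simp add: e_def)
      finally show "\<bar>Re e\<bar> \<le> 1" .
      show "0 \<le> N C" using nN CB unfolding is_norm_on_BH_def by blast
    qed
    finally show "ereal (N (ReOp (op_scale (exp (\<i> * complex_of_real \<theta>)) C))) \<le> ereal (N C)"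
      by (simp add: e_def)
  qed
  have key: "N T \<le> 2 * s" if "\<And>U. U \<in> unitaries \<Longrightarrow> N U \<le> s" for s
    by (rule N_contraction_le[OF nN that TB bT])
  define S where "S = (SUP U\<in>unitaries. ereal (N U))"
  have "ereal (N C) \<le> ereal (4 * N T) * S"
  proof (cases S)
    case (real s)
    have "N U \<le> s" if "U \<in> unitaries" for U
    proof -
      have "ereal (N U) \<le> S" unfolding S_def using that by (rule SUP_upper)
      then show ?thesis using real by simp
    qed
    then have "N T \<le> 2 * s" by (rule key)
    then have "N T * N T \<le> N T * (2 * s)" using NT0 by (rule mult_left_mono)
    then have "N C \<le> 4 * N T * s" using NC by (simp add: power2_eq_square)
    then show ?thesis using real by simp
  next
    case PInf
    show ?thesis
    proof (cases "N T = 0")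
      case True
      then have "N C \<le> 0" using NC by simp
      then show ?thesis using True PInf by simp
    next
      case False
      then have "N T > 0" using NT0 by simp
      then show ?thesis using PInf by simp
    qed
  next
    case MInf
    have "N U \<le> 0" if "U \<in> unitaries" for U
    proof -
      have "ereal (N U) \<le> S" unfolding S_def using that by (rule SUP_upper)
      then show ?thesis using MInf by simp
    qed
    then have "N T \<le> 0" using key[of 0] by simp
    then have "N T = 0" using NT0 by simp
    then have "N C \<le> 0" using NC by simp
    then show ?thesis using MInf \<open>N T = 0\<close> by simp
  qed
  then show ?thesis using gen unfolding C_def Ts_def S_def by (rule order_trans[rotated])
qed

end
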